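(* For every digraph $F$, $\mathrm{mad}_{\vec{\chi}}(F)\leq 4^{m-n+\mathrm{cc}(F)}(n-1)+1$, where $m=|A(F)|$, $n=|V(F)|$ and $\mathrm{cc}(F)$ is the number of connected components of the underlying graph of $F$.
   Context: $\vec{\chi}(D)$ is the dichromatic number (least $k$ such that $V(D)$ partitions into $k$ sets inducing acyclic subdigraphs). A subdivision of $F$ is obtained by replacing each arc $(x,y)$ by a directed $(x,y)$-path, internally disjoint with new internal vertices. $\mathrm{mad}_{\vec{\chi}}(F)$ is the least integer $c$ such that every digraph $D$ with $\vec{\chi}(D)\ge c$ contains a subdivision of $F$ as a subdigraph (such $c$ exists for every digraph $F$). *)

theory Defs
  imports Main
begin

text \<open>A (finite, loopless) digraph is given by a vertex set V and an arc set A \<subseteq> V \<times> V.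
  Digons (both (x,y) and (y,x)) are allowed; parallel arcs are not.\<close>
definition is_digraph :: "'a set \<Rightarrow> ('a \<times> 'a) set \<Rightarrow> bool" where
  "is_digraph V A \<longleftrightarrow> finite V \<and> A \<subseteq> V \<times> V \<and> (\<forall>x. (x, x) \<notin> A)"

definition acyclic_colouring :: "'a set \<Rightarrow> ('a \<times> 'a) set \<Rightarrow> nat \<Rightarrow> ('a \<Rightarrow> nat) \<Rightarrow> bool" where
  "acyclic_colouring V A k f \<longleftrightarrow>
     (\<forall>v\<in>V. f v < k) \<and>
     (\<forall>i<k. acyclic (A \<inter> ({v\<in>V. f v = i} \<times> {v\<in>V. f v = i})))"

definition dichromatic :: "'a set \<Rightarrow> ('a \<times> 'a) set \<Rightarrow> nat" where
  "dichromatic V A = (LEAST k. \<exists>f. acyclic_colouring V A k f)"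

definition is_dipath :: "('a \<times> 'a) set \<Rightarrow> 'a list \<Rightarrow> 'a \<Rightarrow> 'a \<Rightarrow> bool" where
  "is_dipath A P x y \<longleftrightarrow> distinct P \<and> length P \<ge> 2 \<and> hd P = x \<and> last P = y \<and>
     (\<forall>i. Suc i < length P \<longrightarrow> (P ! i, P ! Suc i) \<in> A)"

definition internal_vertices :: "'a list \<Rightarrow> 'a set" where
  "internal_vertices P = set (butlast (tl P))"

definition contains_subdivision ::
  "'b set \<Rightarrow> ('b \<times> 'b) set \<Rightarrow> 'a set \<Rightarrow> ('a \<times> 'a) set \<Rightarrow> bool" where
  "contains_subdivision VD AD VF AF \<longleftrightarrow>
     (\<exists>(\<phi> :: 'a \<Rightarrow> 'b) (P :: 'a \<times> 'a \<Rightarrow> 'b list).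
        inj_on \<phi> VF \<and> \<phi> ` VF \<subseteq> VD \<and>
        (\<forall>e\<in>AF. is_dipath AD (P e) (\<phi> (fst e)) (\<phi> (snd e)) \<and>
                 internal_vertices (P e) \<inter> \<phi> ` VF = {}) \<and>
        (\<forall>e\<in>AF. \<forall>e'\<in>AF. e \<noteq> e' \<longrightarrow>
                 internal_vertices (P e) \<inter> internal_vertices (P e') = {}))"

text \<open>Host digraphs are taken with vertices in nat (every finite
  digraph is isomorphic to one of these).\<close>
definition mad_chi :: "'a set \<Rightarrow> ('a \<times> 'a) set \<Rightarrow> nat" where
  "mad_chi VF AF = (LEAST c. \<forall>(VD :: nat set) AD.
       is_digraph VD AD \<and> dichromatic VD AD \<ge> c \<longrightarrow> contains_subdivision VD AD VF AF)"

definition num_cc :: "'a set \<Rightarrow> ('a \<times> 'a) set \<Rightarrow> nat" where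
  "num_cc V A = card (V // (((A \<union> A\<inverse>)\<^sup>*) \<inter> (V \<times> V)))"

end

theory Submission
  imports Defs
begin

definition eqv :: "('a \<times> 'a) set \<Rightarrow> ('a \<times> 'a) set" where
  "eqv A = (A \<union> A\<inverse>)\<^sup>*"

lemma eqv_sym: "(x,y) \<in> eqv A \<Longrightarrow> (y,x) \<in> eqv A"
  unfolding eqv_def
  by (metis converse_Un converse_converse rtrancl_converseI sup_commute)

lemma eqv_trans: "(x,y) \<in> eqv A \<Longrightarrow> (y,z) \<in> eqv A \<Longrightarrow> (x,z) \<in> eqv A"
  unfolding eqv_def by (rule rtrancl_trans)

lemma eqv_refl[simp]: "(x,x) \<in> eqv A"
  unfolding eqv_def by simp

lemma eqv_arc: "(x,y) \<in> A \<Longrightarrow> (x,y) \<in> eqv A"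
  unfolding eqv_def by auto

lemma eqv_mono: "A \<subseteq> B \<Longrightarrow> eqv A \<subseteq> eqv B"
  unfolding eqv_def by (rule rtrancl_mono) auto

lemma equiv_eqv: "equiv UNIV (eqv A)"
  unfolding equiv_def refl_on_def sym_def trans_def
proof (intro conjI allI impI ballI)
  show "eqv A \<subseteq> UNIV \<times> UNIV" by simp
  show "(x, x) \<in> eqv A" for x by simp
  show "(x, y) \<in> eqv A \<Longrightarrow> (y, x) \<in> eqv A" for x y by (rule eqv_sym)
  show "(x, y) \<in> eqv A \<Longrightarrow> (y, z) \<in> eqv A \<Longrightarrow> (x, z) \<in> eqv A" for x y z by (rule eqv_trans)
qed

lemma eqv_in_V: assumes "A \<subseteq> V \<times> V" "(x,y) \<in> eqv A" "x \<in> V" shows "y \<in> V"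
  using assms(2,3) unfolding eqv_def
  by (induction rule: rtrancl_induct) (use assms(1) in auto)

lemma num_cc_alt:
  assumes "A \<subseteq> V \<times> V"
  shows "num_cc V A = card ((\<lambda>x. eqv A `` {x}) ` V)"
proof -
  have e: "((A \<union> A\<inverse>)\<^sup>* \<inter> V \<times> V) `` {x} = eqv A `` {x}" if "x \<in> V" for x
  proof
    show "((A \<union> A\<inverse>)\<^sup>* \<inter> V \<times> V) `` {x} \<subseteq> eqv A `` {x}" unfolding eqv_def by blast
    show "eqv A `` {x} \<subseteq> ((A \<union> A\<inverse>)\<^sup>* \<inter> V \<times> V) `` {x}"
    proof
      fix y assume "y \<in> eqv A `` {x}"
      then have "(x,y) \<in> eqv A" by simp
      moreover have "y \<in> V" using eqv_in_V[OF assms \<open>(x,y) \<in> eqv A\<close> that] .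
      ultimately show "y \<in> ((A \<union> A\<inverse>)\<^sup>* \<inter> V \<times> V) `` {x}" using that unfolding eqv_def by blast
    qed
  qed
  have "V // ((A \<union> A\<inverse>)\<^sup>* \<inter> V \<times> V) = (\<lambda>x. ((A \<union> A\<inverse>)\<^sup>* \<inter> V \<times> V) `` {x}) ` V"
    unfolding quotient_def by blast
  also have "\<dots> = (\<lambda>x. eqv A `` {x}) ` V"
    using e by (rule image_cong[OF refl])
  finally show ?thesis unfolding num_cc_def by simp
qed

lemma cls_eq_iff: "eqv A `` {x} = eqv A `` {y} \<longleftrightarrow> (x,y) \<in> eqv A"
  by (rule eq_equiv_class_iff[OF equiv_eqv UNIV_I UNIV_I])

lemma isolated_cls:
  assumes "A \<subseteq> V \<times> V" "w \<notin> V"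
  shows "eqv A `` {w} = {w}"
proof -
  have "(w,y) \<in> eqv A \<Longrightarrow> y = w" for y
    unfolding eqv_def
    by (erule converse_rtranclE) (use assms in auto)
  then show ?thesis by auto
qed

lemma num_cc_isolated:
  assumes "A \<subseteq> V \<times> V" "w \<notin> V" "finite V"
  shows "num_cc (insert w V) A = num_cc V A + 1"
proof -
  have A2: "A \<subseteq> insert w V \<times> insert w V" using assms by auto
  have "(\<lambda>x. eqv A `` {x}) ` insert w V = insert {w} ((\<lambda>x. eqv A `` {x}) ` V)"
    using isolated_cls[OF assms(1,2)] by simp
  moreover have "{w} \<notin> (\<lambda>x. eqv A `` {x}) ` V"
  proof
    assume "{w} \<in> (\<lambda>x. eqv A `` {x}) ` V"
    then obtain x where "x \<in> V" "{w} = eqv A `` {x}" by auto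
    then have "(x,w) \<in> eqv A" by auto
    then show False using eqv_in_V[OF assms(1)] \<open>x \<in> V\<close> assms(2) by blast
  qed
  ultimately show ?thesis using num_cc_alt[OF A2] num_cc_alt[OF assms(1)] assms(3) by simp
qed

lemma num_cc_connected:
  assumes "(u,v) \<in> eqv A"
  shows "num_cc V (insert (u,v) A) = num_cc V A"
proof -
  have "eqv (insert (u,v) A) = eqv A"
    unfolding eqv_def
  proof (rule rtrancl_subset)
    show "A \<union> A\<inverse> \<subseteq> insert (u, v) A \<union> (insert (u, v) A)\<inverse>" by auto
    show "insert (u, v) A \<union> (insert (u, v) A)\<inverse> \<subseteq> (A \<union> A\<inverse>)\<^sup>*"
      using assms eqv_sym[OF assms] unfolding eqv_def by auto
  qed
  then show ?thesis unfolding num_cc_def eqv_def by simp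
qed

lemma num_cc_merge:
  assumes AV: "A \<subseteq> V \<times> V" and uv: "u \<in> V" "v \<in> V" and nc: "(u,v) \<notin> eqv A"
    and fin: "finite V"
  shows "num_cc V (insert (u,v) A) + 1 = num_cc V A"
proof -
  define A2 where "A2 = insert (u,v) A"
  define U where "U = eqv A `` {u} \<union> eqv A `` {v}"
  have A2V: "A2 \<subseteq> V \<times> V" using AV uv by (auto simp: A2_def)
  have Umem: "x \<in> U \<longleftrightarrow> (u,x) \<in> eqv A \<or> (v,x) \<in> eqv A" for x
    unfolding U_def by auto
  have Ucl: "x \<in> U \<Longrightarrow> (x,y) \<in> eqv A \<Longrightarrow> y \<in> U" for x y
    unfolding Umem using eqv_trans[of u x A y] eqv_trans[of v x A y] by auto
  have char: "eqv A2 = eqv A \<union> U \<times> U"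
  proof
    show "eqv A \<union> U \<times> U \<subseteq> eqv A2"
    proof
      fix p assume "p \<in> eqv A \<union> U \<times> U"
      then obtain x y where p: "p = (x,y)" and "(x,y) \<in> eqv A \<or> (x \<in> U \<and> y \<in> U)" by (cases p) auto
      have sub: "eqv A \<subseteq> eqv A2" by (rule eqv_mono) (auto simp: A2_def)
      have uv2: "(u,v) \<in> eqv A2" "(v,u) \<in> eqv A2"
        using eqv_arc[of u v A2] eqv_sym[of u v A2] by (auto simp: A2_def)
      { assume "x \<in> U" "y \<in> U"
        then have "(u,x) \<in> eqv A2 \<or> (v,x) \<in> eqv A2" "(u,y) \<in> eqv A2 \<or> (v,y) \<in> eqv A2"
          unfolding Umem using sub by auto
        then have "(x,u) \<in> eqv A2 \<or> (x,v) \<in> eqv A2" "(u,y) \<in> eqv A2 \<or> (v,y) \<in> eqv A2"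
          using eqv_sym[of u x A2] eqv_sym[of v x A2] by auto
        then have "(x,y) \<in> eqv A2" using uv2 eqv_trans by meson }
      then show "p \<in> eqv A2" using p \<open>(x,y) \<in> eqv A \<or> (x \<in> U \<and> y \<in> U)\<close> sub by blast
    qed
    show "eqv A2 \<subseteq> eqv A \<union> U \<times> U"
    proof
      fix p assume "p \<in> eqv A2"
      then obtain x y where p: "p = (x,y)" and xy: "(x,y) \<in> (A2 \<union> A2\<inverse>)\<^sup>*" by (cases p) (auto simp: eqv_def)
      from xy have "(x,y) \<in> eqv A \<or> (x \<in> U \<and> y \<in> U)"
      proof (induction rule: rtrancl_induct)
        case base then show ?case by simp
      next
        case (step y z)
        show ?case
        proof (cases "(y,z) \<in> A \<union> A\<inverse>")
          case True
          then have yz: "(y,z) \<in> eqv A" unfolding eqv_def by auto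
          then show ?thesis using step.IH eqv_trans[of x y A z] Ucl[of y z] by auto
        next
          case False
          then have "(y,z) = (u,v) \<or> (y,z) = (v,u)" using step.hyps(2) by (auto simp: A2_def)
          then have yzU: "y \<in> U" "z \<in> U" unfolding U_def by auto
          have "x \<in> U" using step.IH yzU Ucl[of y x] eqv_sym[of x y A] by auto
          then show ?thesis using yzU by blast
        qed
      qed
      then show "p \<in> eqv A \<union> U \<times> U" using p by auto
    qed
  qed
  have cls2: "eqv A2 `` {x} = (if x \<in> U then U else eqv A `` {x})" for x
  proof (cases "x \<in> U")
    case True
    then have "eqv A `` {x} \<subseteq> U" using Ucl[of x] by blast
    then show ?thesis using char True by auto
  next
    case False
    then show ?thesis using char by auto
  qed
  define I0 where "I0 = (\<lambda>x. eqv A `` {x}) ` (V - U)"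
  have uU: "u \<in> U" "v \<in> U" unfolding U_def by auto
  have I: "(\<lambda>x. eqv A `` {x}) ` V = insert (eqv A `` {u}) (insert (eqv A `` {v}) I0)"
  proof -
    have "x \<in> U \<Longrightarrow> eqv A `` {x} = eqv A `` {u} \<or> eqv A `` {x} = eqv A `` {v}" for x
      unfolding Umem cls_eq_iff using eqv_sym[of u x A] eqv_sym[of v x A] by auto
    then have s1: "(\<lambda>x. eqv A `` {x}) ` (V \<inter> U) \<subseteq> {eqv A `` {u}, eqv A `` {v}}" by auto
    have s2: "eqv A `` {u} \<in> (\<lambda>x. eqv A `` {x}) ` (V \<inter> U)" "eqv A `` {v} \<in> (\<lambda>x. eqv A `` {x}) ` (V \<inter> U)"
      using uv uU by auto
    have "V = (V \<inter> U) \<union> (V - U)" by auto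
    then have "(\<lambda>x. eqv A `` {x}) ` V = (\<lambda>x. eqv A `` {x}) ` (V \<inter> U) \<union> I0"
      unfolding I0_def by (metis image_Un)
    moreover have "(\<lambda>x. eqv A `` {x}) ` (V \<inter> U) = {eqv A `` {u}, eqv A `` {v}}"
      using s1 s2 by auto
    ultimately show ?thesis by auto
  qed
  have I2: "(\<lambda>x. eqv A2 `` {x}) ` V = insert U I0"
    unfolding I0_def using cls2 uv uU by auto
  have notin: "X \<in> I0 \<Longrightarrow> u \<notin> X \<and> v \<notin> X" for X
  proof -
    assume "X \<in> I0"
    then obtain x where x: "x \<in> V" "x \<notin> U" "X = eqv A `` {x}" unfolding I0_def by auto
    show ?thesis
    proof (rule ccontr)
      assume "\<not> (u \<notin> X \<and> v \<notin> X)"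
      then have "(x,u) \<in> eqv A \<or> (x,v) \<in> eqv A" using x by auto
      then have "x \<in> U" unfolding Umem using eqv_sym[of x u A] eqv_sym[of x v A] by auto
      then show False using x by simp
    qed
  qed
  have fI0: "finite I0" unfolding I0_def using fin by simp
  have d1: "eqv A `` {u} \<notin> I0" "eqv A `` {v} \<notin> I0" "U \<notin> I0"
    using notin[of "eqv A `` {u}"] apply force
    using notin[of "eqv A `` {v}"] apply force
    using notin[of U] uU by blast
  have d2: "eqv A `` {u} \<noteq> eqv A `` {v}" using nc cls_eq_iff by metis
  have "num_cc V A = card I0 + 2"
    unfolding num_cc_alt[OF AV] I using d1 d2 fI0 by simp
  moreover have "num_cc V A2 = card I0 + 1"
    unfolding num_cc_alt[OF A2V] I2 using d1 fI0 by simp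
  ultimately show ?thesis unfolding A2_def by simp
qed

lemma num_cc_empty: "finite V \<Longrightarrow> num_cc V {} = card V"
proof -
  assume "finite V"
  have "eqv {} `` {x} = {x}" for x :: 'a by (simp add: eqv_def)
  then have "(\<lambda>x. eqv {} `` {x}) ` V = (\<lambda>x. {x}) ` V" by simp
  moreover have "card ((\<lambda>x::'a. {x}) ` V) = card V" by (rule card_image) (simp add: inj_on_def)
  ultimately show ?thesis using num_cc_alt[of "{}" V] by simp
qed

lemma num_cc_pos: "A \<subseteq> V \<times> V \<Longrightarrow> finite V \<Longrightarrow> V \<noteq> {} \<Longrightarrow> num_cc V A \<ge> 1"
  using num_cc_alt[of A V] by (simp add: Suc_le_eq card_gt_0_iff)

lemma cc_lower:
  assumes "finite A" "A \<subseteq> V \<times> V" "finite V"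
  shows "card V \<le> card A + num_cc V A"
  using assms(1,2)
proof (induction A rule: finite_induct)
  case empty then show ?case using num_cc_empty[OF assms(3)] by simp
next
  case (insert a A0)
  obtain u v where a: "a = (u,v)" by (cases a)
  have uv: "u \<in> V" "v \<in> V" using insert.prems a by auto
  have A0V: "A0 \<subseteq> V \<times> V" using insert.prems by auto
  have IH: "card V \<le> card A0 + num_cc V A0" using insert.IH A0V .
  have c: "card (insert a A0) = card A0 + 1" using insert.hyps by simp
  show ?case
  proof (cases "(u,v) \<in> eqv A0")
    case True
    then show ?thesis using num_cc_connected[OF True, of V] IH c a by simp
  next
    case False
    then show ?thesis using num_cc_merge[OF A0V uv False assms(3)] IH c a by simp
  qed
qed

lemma cc_bridges:
  assumes "finite A" "A \<subseteq> V \<times> V" "finite V"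
    and "\<forall>a\<in>A. (fst a, snd a) \<notin> eqv (A - {a})"
  shows "card A + num_cc V A \<le> card V"
  using assms(1,2,4)
proof (induction A rule: finite_induct)
  case empty then show ?case using num_cc_empty[OF assms(3)] by simp
next
  case (insert a A0)
  obtain u v where a: "a = (u,v)" by (cases a)
  have uv: "u \<in> V" "v \<in> V" using insert.prems a by auto
  have A0V: "A0 \<subseteq> V \<times> V" using insert.prems by auto
  have br: "\<forall>b\<in>A0. (fst b, snd b) \<notin> eqv (A0 - {b})"
  proof
    fix b assume b: "b \<in> A0"
    have "eqv (A0 - {b}) \<subseteq> eqv (insert a A0 - {b})" by (rule eqv_mono) auto
    then show "(fst b, snd b) \<notin> eqv (A0 - {b})" using insert.prems(2) b by auto
  qed
  have IH: "card A0 + num_cc V A0 \<le> card V" using insert.IH[OF A0V br] .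
  have "insert a A0 - {a} = A0" using insert.hyps by auto
  then have nc: "(u,v) \<notin> eqv A0" using insert.prems(2) a by force
  have c: "card (insert a A0) = card A0 + 1" using insert.hyps by simp
  show ?case using num_cc_merge[OF A0V uv nc assms(3)] IH c a by simp
qed

lemma card_out_sum:
  assumes "finite A" "A \<subseteq> V \<times> V" "finite V" and that: "\<forall>a\<in>A. f a \<in> V"
  shows "(\<Sum>w\<in>V. card {a\<in>A. f a = w}) = card A"
proof -
  have "A = (\<Union>w\<in>V. {a\<in>A. f a = w})" using that by auto
  moreover have "card (\<Union>w\<in>V. {a\<in>A. f a = w}) = (\<Sum>w\<in>V. card {a\<in>A. f a = w})"
    by (rule card_UN_disjoint) (use assms in auto)
  ultimately show ?thesis by simp
qed

lemma low_degree_vertex: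
  assumes dg: "is_digraph V A" and lt: "card A < card V"
  shows "\<exists>w\<in>V. card {a\<in>A. fst a = w \<or> snd a = w} \<le> 1"
proof (rule ccontr)
  assume "\<not> ?thesis"
  then have ge: "\<forall>w\<in>V. 2 \<le> card {a\<in>A. fst a = w \<or> snd a = w}" by auto
  have fV: "finite V" and AV: "A \<subseteq> V \<times> V" and nl: "\<forall>x. (x,x) \<notin> A"
    using dg unfolding is_digraph_def by auto
  have fA: "finite A" using AV fV finite_subset by blast
  have split: "card {a\<in>A. fst a = w \<or> snd a = w} = card {a\<in>A. fst a = w} + card {a\<in>A. snd a = w}" for w
  proof -
    have "{a\<in>A. fst a = w \<or> snd a = w} = {a\<in>A. fst a = w} \<union> {a\<in>A. snd a = w}" by auto
    moreover have "{a\<in>A. fst a = w} \<inter> {a\<in>A. snd a = w} = {}" using nl by auto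
    ultimately show ?thesis using fA by (simp add: card_Un_disjoint)
  qed
  have s1: "(\<Sum>w\<in>V. card {a\<in>A. fst a = w}) = card A"
    by (rule card_out_sum[OF fA AV fV]) (use AV in auto)
  have s2: "(\<Sum>w\<in>V. card {a\<in>A. snd a = w}) = card A"
    by (rule card_out_sum[OF fA AV fV]) (use AV in auto)
  have "(\<Sum>w\<in>V. (2::nat)) \<le> (\<Sum>w\<in>V. card {a\<in>A. fst a = w \<or> snd a = w})"
    by (rule sum_mono) (use ge in auto)
  also have "\<dots> = 2 * card A" unfolding split sum.distrib s1 s2 by simp
  finally have "2 * card V \<le> 2 * card A" by simp
  then show False using lt by simp
qed

lemma peel:
  assumes dg: "is_digraph V A" and e0: "card A + num_cc V A \<le> card V" and ne: "V \<noteq> {}"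
  shows "\<exists>w\<in>V. card (A \<inter> (V - {w}) \<times> (V - {w})) + num_cc (V - {w}) (A \<inter> (V - {w}) \<times> (V - {w})) \<le> card (V - {w})
     \<and> (A = A \<inter> (V - {w}) \<times> (V - {w}) \<or>
        (\<exists>z\<in>V - {w}. A = insert (w,z) (A \<inter> (V - {w}) \<times> (V - {w})) \<or> A = insert (z,w) (A \<inter> (V - {w}) \<times> (V - {w}))))"
proof -
  have fV: "finite V" and AV: "A \<subseteq> V \<times> V" and nl: "\<forall>x. (x,x) \<notin> A"
    using dg unfolding is_digraph_def by auto
  have fA: "finite A" using AV fV finite_subset by blast
  have "card A < card V" using e0 num_cc_pos[OF AV fV ne] by simp
  then obtain w where w: "w \<in> V" "card {a\<in>A. fst a = w \<or> snd a = w} \<le> 1"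
    using low_degree_vertex[OF dg] by blast
  define V' where "V' = V - {w}"
  define A' where "A' = A \<inter> V' \<times> V'"
  have A'V': "A' \<subseteq> V' \<times> V'" unfolding A'_def by auto
  have wV': "w \<notin> V'" unfolding V'_def by simp
  have VV: "V = insert w V'" unfolding V'_def using w by auto
  have fV': "finite V'" using fV unfolding V'_def by simp
  have cV: "card V = card V' + 1" using VV wV' fV' by simp
  have A'eq: "A' = A - {a\<in>A. fst a = w \<or> snd a = w}" unfolding A'_def V'_def using AV by auto
  have fI: "finite {a\<in>A. fst a = w \<or> snd a = w}" using fA by simp
  show ?thesis
  proof (cases "{a\<in>A. fst a = w \<or> snd a = w} = {}")
    case True
    have AA: "A = A'" using A'eq True by blast
    have "num_cc V A' = num_cc V' A' + 1" unfolding VV using num_cc_isolated[OF A'V' wV' fV'] .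
    then have "card A' + num_cc V' A' \<le> card V'" using e0 AA cV by simp
    then show ?thesis using w(1) AA unfolding V'_def A'_def by blast
  next
    case False
    have "card {a\<in>A. fst a = w \<or> snd a = w} \<noteq> 0" using False fI by simp
    then have "card {a\<in>A. fst a = w \<or> snd a = w} = 1" using w(2) by linarith
    then obtain a where aI: "{a\<in>A. fst a = w \<or> snd a = w} = {a}"
      by (rule card_1_singletonE)
    then have aA: "a \<in> A" and aw: "fst a = w \<or> snd a = w" by auto
    have Ains: "A = insert a A'" using A'eq aI aA by auto
    have aA': "a \<notin> A'" using A'eq aI by auto
    obtain x y where xy: "a = (x,y)" by (cases a)
    have "x \<noteq> y" using nl aA xy by auto
    have xyV: "x \<in> V" "y \<in> V" using AV aA xy by auto
    have iso: "eqv A' `` {w} = {w}" by (rule isolated_cls[OF A'V' wV'])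
    have nc: "(x,y) \<notin> eqv A'"
    proof
      assume xyE: "(x,y) \<in> eqv A'"
      then have "(y,x) \<in> eqv A'" by (rule eqv_sym)
      then show False using xyE iso aw xy \<open>x \<noteq> y\<close> by auto
    qed
    have A'V: "A' \<subseteq> V \<times> V" using A'V' VV by auto
    have m: "num_cc V A + 1 = num_cc V A'"
      using num_cc_merge[OF A'V xyV nc fV] Ains xy by simp
    have i: "num_cc V A' = num_cc V' A' + 1" unfolding VV using num_cc_isolated[OF A'V' wV' fV'] .
    have fA': "finite A'" using fA A'eq by simp
    have "card A = card (insert a A')" using Ains by simp
    also have "\<dots> = card A' + 1" using aA' fA' by simp
    finally have cA: "card A = card A' + 1" .
    have "card A' + num_cc V' A' \<le> card V'" using e0 m i cA cV by simp
    moreover have "\<exists>z\<in>V'. A = insert (w,z) A' \<or> A = insert (z,w) A'"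
    proof (cases "x = w")
      case True
      then have "y \<in> V'" using xyV \<open>x \<noteq> y\<close> unfolding V'_def by auto
      then show ?thesis using Ains xy True by blast
    next
      case False
      then have "y = w" using aw xy by auto
      have "x \<in> V'" using xyV False unfolding V'_def by auto
      then show ?thesis using Ains xy \<open>y = w\<close> by blast
    qed
    ultimately show ?thesis using w(1) unfolding V'_def A'_def by blast
  qed
qed

definition colourable :: "'a set \<Rightarrow> ('a \<times> 'a) set \<Rightarrow> nat \<Rightarrow> bool" where
  "colourable V A k \<longleftrightarrow> (\<exists>f. acyclic_colouring V A k f)"

lemma colourable_mono:
  assumes "colourable V A k" "k \<le> k'" shows "colourable V A k'"
proof -
  obtain f where f: "acyclic_colouring V A k f" using assms(1) unfolding colourable_def by blast
  have "acyclic_colouring V A k' f"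
    unfolding acyclic_colouring_def
  proof (intro conjI allI impI ballI)
    show "f v < k'" if "v \<in> V" for v using f that assms(2) unfolding acyclic_colouring_def by fastforce
    fix i assume "i < k'"
    show "acyclic (A \<inter> {v \<in> V. f v = i} \<times> {v \<in> V. f v = i})"
    proof (cases "i < k")
      case True then show ?thesis using f unfolding acyclic_colouring_def by blast
    next
      case False
      then have e: "{v \<in> V. f v = i} = {}" using f unfolding acyclic_colouring_def by force
      have "A \<inter> {v \<in> V. f v = i} \<times> {v \<in> V. f v = i} = {}" unfolding e by simp
      then show ?thesis unfolding acyclic_def by simp
    qed
  qed
  then show ?thesis unfolding colourable_def by blast
qed

lemma colourable_subset:
  assumes "colourable V A k" "W \<subseteq> V" shows "colourable W A k"
proof -
  obtain f where f: "acyclic_colouring V A k f" using assms(1) unfolding colourable_def by blast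
  have "acyclic_colouring W A k f"
    unfolding acyclic_colouring_def
  proof (intro conjI allI impI ballI)
    show "f v < k" if "v \<in> W" for v using f that assms(2) unfolding acyclic_colouring_def by blast
    fix i assume i: "i < k"
    have "A \<inter> {v \<in> W. f v = i} \<times> {v \<in> W. f v = i} \<subseteq> A \<inter> {v \<in> V. f v = i} \<times> {v \<in> V. f v = i}"
      using assms(2) by auto
    then show "acyclic (A \<inter> {v \<in> W. f v = i} \<times> {v \<in> W. f v = i})"
      using f i unfolding acyclic_colouring_def by (meson acyclic_subset)
  qed
  then show ?thesis unfolding colourable_def by blast
qed

lemma colourable_restrict: "colourable V (A \<inter> V \<times> V) k \<longleftrightarrow> colourable V A k"
proof -
  have eq: "A \<inter> V \<times> V \<inter> {v \<in> V. f v = i} \<times> {v \<in> V. f v = i} = A \<inter> {v \<in> V. f v = i} \<times> {v \<in> V. f v = i}" for f :: "'a \<Rightarrow> nat" and i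
    by auto
  show ?thesis unfolding colourable_def acyclic_colouring_def eq by (rule refl)
qed

lemma colourable_empty: "colourable {} A k"
  unfolding colourable_def acyclic_colouring_def by (simp add: acyclic_def)

lemma colourable_nat:
  fixes V :: "nat set"
  assumes "is_digraph V A" shows "\<exists>k. colourable V A k"
proof -
  have fV: "finite V" and nl: "\<forall>x. (x,x) \<notin> A" using assms unfolding is_digraph_def by auto
  have "acyclic_colouring V A (Suc (Max (insert 0 V))) id"
    unfolding acyclic_colouring_def
  proof (intro conjI allI impI ballI)
    show "id v < Suc (Max (insert 0 V))" if "v \<in> V" for v using fV that by (simp add: le_imp_less_Suc)
    fix i
    have "A \<inter> {v \<in> V. id v = i} \<times> {v \<in> V. id v = i} = {}" using nl by auto
    then show "acyclic (A \<inter> {v \<in> V. id v = i} \<times> {v \<in> V. id v = i})" by (simp add: acyclic_def)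
  qed
  then show ?thesis unfolding colourable_def by blast
qed

lemma dichromatic_ge_not_col:
  assumes "dichromatic V A \<ge> c" "c \<ge> 1" shows "\<not> colourable V A (c - 1)"
proof
  assume "colourable V A (c - 1)"
  then have "dichromatic V A \<le> c - 1" unfolding dichromatic_def colourable_def by (rule Least_le)
  then show False using assms by simp
qed

lemma not_col_dichromatic_ge:
  fixes V :: "nat set"
  assumes "is_digraph V A" "\<not> colourable V A (c - 1)" "c \<ge> 1" shows "dichromatic V A \<ge> c"
proof (rule ccontr)
  assume "\<not> c \<le> dichromatic V A"
  obtain k where "colourable V A k" using colourable_nat[OF assms(1)] by blast
  then have "colourable V A (dichromatic V A)" unfolding dichromatic_def colourable_def by (rule LeastI)
  then have "colourable V A (c - 1)" by (rule colourable_mono) (use \<open>\<not> c \<le> dichromatic V A\<close> in simp)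
  then show False using assms(2) by simp
qed

lemma acyc_sink:
  assumes ac: "acyclic (R \<inter> K0 \<times> K0)" and sink: "\<forall>y. (x,y) \<notin> R \<inter> insert x K0 \<times> insert x K0"
  shows "acyclic (R \<inter> insert x K0 \<times> insert x K0)"
proof -
  define B where "B = R \<inter> insert x K0 \<times> insert x K0"
  define B0 where "B0 = R \<inter> K0 \<times> K0"
  have sinkB: "(x,y) \<notin> B" for y using sink unfolding B_def by blast
  have key: "(a,b) \<in> B\<^sup>+ \<Longrightarrow> a \<noteq> x \<Longrightarrow> b = x \<or> (a,b) \<in> B0\<^sup>+" for a b
  proof (induction rule: trancl_induct)
    case (base y)
    then show ?case unfolding B_def B0_def by blast
  next
    case (step y z)
    then have "y \<noteq> x" using sinkB by blast
    then have "(a,y) \<in> B0\<^sup>+" using step by blast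
    moreover have "z = x \<or> (y,z) \<in> B0" using step(2) \<open>y \<noteq> x\<close> unfolding B_def B0_def by blast
    ultimately show ?case by (meson trancl.trancl_into_trancl)
  qed
  show ?thesis unfolding acyclic_def B_def[symmetric]
  proof (intro allI notI)
    fix a assume a: "(a,a) \<in> B\<^sup>+"
    show False
    proof (cases "a = x")
      case True
      then show False using a sinkB by (metis converse_tranclE)
    next
      case False
      then have "(a,a) \<in> B0\<^sup>+" using key[OF a] by blast
      then show False using ac unfolding acyclic_def B0_def by blast
    qed
  qed
qed

lemma acyc_source:
  assumes ac: "acyclic (R \<inter> K0 \<times> K0)" and src: "\<forall>y. (y,x) \<notin> R \<inter> insert x K0 \<times> insert x K0"
  shows "acyclic (R \<inter> insert x K0 \<times> insert x K0)"
proof -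
  have e: "(R \<inter> K \<times> K)\<inverse> = R\<inverse> \<inter> K \<times> K" for K by auto
  have "acyclic (R\<inverse> \<inter> K0 \<times> K0)" using ac e[of K0] by (metis acyclic_converse)
  moreover have "\<forall>y. (x,y) \<notin> R\<inverse> \<inter> insert x K0 \<times> insert x K0" using src by auto
  ultimately have "acyclic (R\<inverse> \<inter> insert x K0 \<times> insert x K0)" by (rule acyc_sink)
  then show ?thesis using e[of "insert x K0"] by (metis acyclic_converse)
qed

lemma colour_extend:
  assumes f: "acyclic_colouring (W - {x}) A k f" and c: "c < k" and xW: "x \<in> W"
    and nl: "(x,x) \<notin> A"
    and no: "(\<forall>y\<in>W - {x}. f y = c \<longrightarrow> (x,y) \<notin> A) \<or> (\<forall>y\<in>W - {x}. f y = c \<longrightarrow> (y,x) \<notin> A)"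
  shows "colourable W A k"
proof -
  define g where "g = f(x := c)"
  have "acyclic_colouring W A k g"
    unfolding acyclic_colouring_def
  proof (intro conjI allI impI ballI)
    show "g v < k" if "v \<in> W" for v
      using f c that unfolding g_def acyclic_colouring_def by (cases "v = x") auto
    fix i assume i: "i < k"
    have acf: "acyclic (A \<inter> {v \<in> W - {x}. f v = i} \<times> {v \<in> W - {x}. f v = i})"
      using f i unfolding acyclic_colouring_def by blast
    show "acyclic (A \<inter> {v \<in> W. g v = i} \<times> {v \<in> W. g v = i})"
    proof (cases "i = c")
      case False
      then have "{v \<in> W. g v = i} = {v \<in> W - {x}. f v = i}" unfolding g_def by auto
      then show ?thesis using acf by simp
    next
      case True
      have eq: "{v \<in> W. g v = i} = insert x {v \<in> W - {x}. f v = i}" unfolding g_def using True xW by auto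
      from no show ?thesis
      proof
        assume n: "\<forall>y\<in>W - {x}. f y = c \<longrightarrow> (x,y) \<notin> A"
        have "\<forall>y. (x,y) \<notin> A \<inter> insert x {v \<in> W - {x}. f v = i} \<times> insert x {v \<in> W - {x}. f v = i}"
          using n nl True by blast
        then show ?thesis unfolding eq by (rule acyc_sink[OF acf])
      next
        assume n: "\<forall>y\<in>W - {x}. f y = c \<longrightarrow> (y,x) \<notin> A"
        have "\<forall>y. (y,x) \<notin> A \<inter> insert x {v \<in> W - {x}. f v = i} \<times> insert x {v \<in> W - {x}. f v = i}"
          using n nl True by blast
        then show ?thesis unfolding eq by (rule acyc_source[OF acf])
      qed
    qed
  qed
  then show ?thesis unfolding colourable_def by blast
qed

lemma pick_outside:
  assumes "finite Y" "card Y < card X" shows "\<exists>x\<in>X. x \<notin> Y"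
proof (rule ccontr)
  assume "\<not> ?thesis"
  then have "X \<subseteq> Y" by blast
  then have "card X \<le> card Y" using assms(1) by (rule card_mono[rotated])
  then show False using assms(2) by simp
qed

lemma free_colour:
  assumes f: "acyclic_colouring (W - {x}) A k f" and fin: "finite N" and lt: "card N < k"
  shows "\<exists>c<k. \<forall>y\<in>N. f y \<noteq> c"
proof -
  have "card (f ` N) < card {0..<k}" using card_image_le[OF fin, of f] lt by simp
  then obtain c where "c \<in> {0..<k}" "c \<notin> f ` N" using pick_outside[of "f ` N" "{0..<k}"] fin by blast
  then show ?thesis by auto
qed

lemma min_degree_sub:
  assumes dg: "is_digraph VD AD" and nc: "\<not> colourable VD AD k"
  shows "\<exists>W\<subseteq>VD. W \<noteq> {} \<and> (\<forall>x\<in>W. k \<le> card {y\<in>W. (x,y) \<in> AD} \<and> k \<le> card {y\<in>W. (y,x) \<in> AD})"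
proof -
  have fVD: "finite VD" and nl: "\<forall>x. (x,x) \<notin> AD" using dg unfolding is_digraph_def by auto
  define P where "P W \<longleftrightarrow> W \<subseteq> VD \<and> \<not> colourable W AD k" for W
  have "\<exists>n W. P W \<and> card W = n" using nc unfolding P_def by blast
  define n where "n = (LEAST n. \<exists>W. P W \<and> card W = n)"
  obtain W where W: "P W" "card W = n" using LeastI_ex[OF \<open>\<exists>n W. P W \<and> card W = n\<close>] unfolding n_def by blast
  have minW: "P W' \<Longrightarrow> n \<le> card W'" for W' unfolding n_def by (rule Least_le) blast
  have WV: "W \<subseteq> VD" and Wnc: "\<not> colourable W AD k" using W(1) unfolding P_def by auto
  have fW: "finite W" using WV fVD finite_subset by blast
  have Wne: "W \<noteq> {}" using Wnc colourable_empty by blast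
  have deg: "k \<le> card {y\<in>W. (x,y) \<in> AD} \<and> k \<le> card {y\<in>W. (y,x) \<in> AD}" if xW: "x \<in> W" for x
  proof (rule ccontr)
    assume "\<not> ?thesis"
    then have lt: "card {y\<in>W. (x,y) \<in> AD} < k \<or> card {y\<in>W. (y,x) \<in> AD} < k" by auto
    have "card (W - {x}) < card W" using fW xW by (meson card_Diff1_less)
    then have "\<not> P (W - {x})" using minW W(2) by fastforce
    then have "colourable (W - {x}) AD k" unfolding P_def using WV by blast
    then obtain f where f: "acyclic_colouring (W - {x}) AD k f" unfolding colourable_def by blast
    from lt have "colourable W AD k"
    proof
      assume l: "card {y\<in>W. (x,y) \<in> AD} < k"
      obtain c where c: "c < k" "\<forall>y\<in>{y\<in>W. (x,y) \<in> AD}. f y \<noteq> c"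
        using free_colour[OF f _ l] fW by auto
      show ?thesis by (rule colour_extend[OF f c(1) xW]) (use nl c(2) in auto)
    next
      assume l: "card {y\<in>W. (y,x) \<in> AD} < k"
      obtain c where c: "c < k" "\<forall>y\<in>{y\<in>W. (y,x) \<in> AD}. f y \<noteq> c"
        using free_colour[OF f _ l] fW by auto
      show ?thesis by (rule colour_extend[OF f c(1) xW]) (use nl c(2) in auto)
    qed
    then show False using Wnc by simp
  qed
  show ?thesis using WV Wne deg by blast
qed

lemma extend_map:
  assumes "inj_on \<phi> V'" "y \<notin> \<phi> ` V'" "w \<notin> V'"
  shows "inj_on (\<phi>(w := y)) (insert w V')" "(\<phi>(w := y)) ` insert w V' = insert y (\<phi> ` V')"
proof -
  have e: "(\<phi>(w := y)) ` V' = \<phi> ` V'" using assms(3) by (auto intro: image_cong)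
  have "inj_on (\<phi>(w := y)) V'" using assms(1) by (rule inj_on_cong[THEN iffD1, rotated]) (use assms(3) in auto)
  then show "inj_on (\<phi>(w := y)) (insert w V')" using e assms(2,3) by simp
  show "(\<phi>(w := y)) ` insert w V' = insert y (\<phi> ` V')" by (simp only: image_insert e fun_upd_same)
qed

lemma greedy:
  fixes VD :: "'b set" and AD
  assumes dgD: "is_digraph VD AD" and WV: "W \<subseteq> VD" and Wne: "W \<noteq> {}"
    and deg: "\<forall>x\<in>W. N - 1 \<le> card {y\<in>W. (x,y) \<in> AD} \<and> N - 1 \<le> card {y\<in>W. (y,x) \<in> AD}"
  shows "is_digraph V A \<Longrightarrow> card A + num_cc V A \<le> card V \<Longrightarrow> card V \<le> N \<Longrightarrow>
     \<exists>\<phi>. inj_on \<phi> V \<and> \<phi> ` V \<subseteq> W \<and> (\<forall>e\<in>A. (\<phi> (fst e), \<phi> (snd e)) \<in> AD)"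
proof (induction "card V" arbitrary: V A)
  case 0
  then have "V = {}" unfolding is_digraph_def by auto
  then have "A = {}" using 0 unfolding is_digraph_def by auto
  then show ?case using \<open>V = {}\<close> by auto
next
  case (Suc n)
  have fVD: "finite VD" and nlD: "\<forall>x. (x,x) \<notin> AD" and ADV: "AD \<subseteq> VD \<times> VD"
    using dgD unfolding is_digraph_def by auto
  have fW: "finite W" using WV fVD finite_subset by blast
  have fV: "finite V" and AV: "A \<subseteq> V \<times> V" and nl: "\<forall>x. (x,x) \<notin> A"
    using Suc.prems unfolding is_digraph_def by auto
  have Vne: "V \<noteq> {}" using Suc.hyps(2) by auto
  obtain w where w: "w \<in> V"
    and e': "card (A \<inter> (V - {w}) \<times> (V - {w})) + num_cc (V - {w}) (A \<inter> (V - {w}) \<times> (V - {w})) \<le> card (V - {w})"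
    and cs: "A = A \<inter> (V - {w}) \<times> (V - {w}) \<or>
        (\<exists>z\<in>V - {w}. A = insert (w,z) (A \<inter> (V - {w}) \<times> (V - {w})) \<or> A = insert (z,w) (A \<inter> (V - {w}) \<times> (V - {w})))"
    using peel[OF Suc.prems(1,2) Vne] by blast
  define V' where "V' = V - {w}"
  define A' where "A' = A \<inter> V' \<times> V'"
  have dg': "is_digraph V' A'" using Suc.prems(1) unfolding is_digraph_def V'_def A'_def by auto
  have cV': "card V' = n" using Suc.hyps(2) w fV unfolding V'_def by simp
  have "\<exists>\<phi>. inj_on \<phi> V' \<and> \<phi> ` V' \<subseteq> W \<and> (\<forall>e\<in>A'. (\<phi> (fst e), \<phi> (snd e)) \<in> AD)"
    using Suc.hyps(1)[OF cV'[symmetric] dg'] e' Suc.prems(3) cV' Suc.hyps(2) unfolding V'_def A'_def by simp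
  then obtain \<phi> where \<phi>: "inj_on \<phi> V'" "\<phi> ` V' \<subseteq> W" "\<forall>e\<in>A'. (\<phi> (fst e), \<phi> (snd e)) \<in> AD" by blast
  have wV': "w \<notin> V'" unfolding V'_def by simp
  have VV: "V = insert w V'" unfolding V'_def using w by auto
  have cimg: "card (\<phi> ` V') = n" using card_image[OF \<phi>(1)] cV' by simp
  have fimg: "finite (\<phi> ` V')" using fV unfolding V'_def by simp
  have nN: "n < N" using Suc.hyps(2) Suc.prems(3) by simp
  have ok: "\<exists>\<psi>. inj_on \<psi> V \<and> \<psi> ` V \<subseteq> W \<and> (\<forall>e\<in>A. (\<psi> (fst e), \<psi> (snd e)) \<in> AD)"
    if y: "y \<in> W" "y \<notin> \<phi> ` V'" and arcs: "\<forall>e\<in>A - A'. (\<phi>(w := y)) (fst e) \<in> (\<phi>(w := y)) ` V \<and> ((\<phi>(w := y)) (fst e), (\<phi>(w := y)) (snd e)) \<in> AD" for y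
  proof (intro exI conjI)
    show "inj_on (\<phi>(w := y)) V" unfolding VV by (rule extend_map(1)[OF \<phi>(1) y(2) wV'])
    show "(\<phi>(w := y)) ` V \<subseteq> W" unfolding VV extend_map(2)[OF \<phi>(1) y(2) wV'] using y(1) \<phi>(2) by blast
    show "\<forall>e\<in>A. ((\<phi>(w := y)) (fst e), (\<phi>(w := y)) (snd e)) \<in> AD"
    proof
      fix e assume eA: "e \<in> A"
      show "((\<phi>(w := y)) (fst e), (\<phi>(w := y)) (snd e)) \<in> AD"
      proof (cases "e \<in> A'")
        case True
        then have "fst e \<noteq> w" "snd e \<noteq> w" using wV' unfolding A'_def by auto
        then show ?thesis using \<phi>(3) True by simp
      next
        case False then show ?thesis using arcs eA by blast
      qed
    qed
  qed
  from cs show ?case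
  proof (elim disjE bexE)
    assume AA: "A = A \<inter> (V - {w}) \<times> (V - {w})"
    have "card W \<ge> N"
    proof -
      obtain w0 where w0: "w0 \<in> W" using Wne by blast
      have "{y\<in>W. (w0,y) \<in> AD} \<subseteq> W - {w0}" using nlD by auto
      then have "card {y\<in>W. (w0,y) \<in> AD} \<le> card (W - {w0})" using fW by (simp add: card_mono)
      moreover have "card (W - {w0}) = card W - 1" using w0 fW by simp
      moreover have "N - 1 \<le> card {y\<in>W. (w0,y) \<in> AD}" using deg w0 by blast
      moreover have "0 < card W" using w0 fW card_gt_0_iff by blast
      ultimately show ?thesis by linarith
    qed
    then have "card (\<phi> ` V') < card W" using cimg nN by linarith
    then obtain y where y: "y \<in> W" "y \<notin> \<phi> ` V'" using pick_outside[OF fimg] by blast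
    have "A - A' = {}" using AA unfolding A'_def V'_def by blast
    then show ?thesis using ok[OF y] by blast
  next
    fix z assume zV: "z \<in> V - {w}" and AA: "A = insert (w, z) (A \<inter> (V - {w}) \<times> (V - {w}))"
    have zV': "z \<in> V'" using zV unfolding V'_def .
    have pz: "\<phi> z \<in> W" using \<phi>(2) zV' by blast
    define X where "X = {y\<in>W. (y, \<phi> z) \<in> AD}"
    have "card (\<phi> ` V' - {\<phi> z}) < card X"
    proof -
      have "card (\<phi> ` V' - {\<phi> z}) = n - 1" using cimg zV' fimg by simp
      moreover have "n \<ge> 1"
      proof -
        have "finite V'" using fV unfolding V'_def by simp
        then have "0 < card V'" using zV' card_gt_0_iff by blast
        then show ?thesis using cV' by simp
      qed
      moreover have "N - 1 \<le> card X" using deg pz unfolding X_def by blast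
      ultimately show ?thesis using nN by linarith
    qed
    moreover have "finite (\<phi> ` V' - {\<phi> z})" using fimg by simp
    ultimately obtain y where y: "y \<in> X" "y \<notin> \<phi> ` V' - {\<phi> z}" using pick_outside by blast
    have "y \<noteq> \<phi> z" using y(1) nlD unfolding X_def by auto
    then have y2: "y \<in> W" "y \<notin> \<phi> ` V'" using y unfolding X_def by auto
    have sub: "A - A' \<subseteq> {(w,z)}" using AA unfolding A'_def V'_def by blast
    have m1: "(\<phi>(w := y)) w \<in> (\<phi>(w := y)) ` V" using w by blast
    have m2: "((\<phi>(w := y)) w, (\<phi>(w := y)) z) \<in> AD" using y(1) zV' wV' unfolding X_def by (auto split: if_splits)
    have "\<forall>e\<in>A - A'. (\<phi>(w := y)) (fst e) \<in> (\<phi>(w := y)) ` V \<and> ((\<phi>(w := y)) (fst e), (\<phi>(w := y)) (snd e)) \<in> AD"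
    proof
      fix e assume "e \<in> A - A'"
      then have "e = (w,z)" using sub by blast
      then show "(\<phi>(w := y)) (fst e) \<in> (\<phi>(w := y)) ` V \<and> ((\<phi>(w := y)) (fst e), (\<phi>(w := y)) (snd e)) \<in> AD"
        using m1 m2 by simp
    qed
    then show ?thesis by (rule ok[OF y2])
  next
    fix z assume zV: "z \<in> V - {w}" and AA: "A = insert (z, w) (A \<inter> (V - {w}) \<times> (V - {w}))"
    have zV': "z \<in> V'" using zV unfolding V'_def .
    have pz: "\<phi> z \<in> W" using \<phi>(2) zV' by blast
    define X where "X = {y\<in>W. (\<phi> z, y) \<in> AD}"
    have "card (\<phi> ` V' - {\<phi> z}) < card X"
    proof -
      have "card (\<phi> ` V' - {\<phi> z}) = n - 1" using cimg zV' fimg by simp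
      moreover have "n \<ge> 1"
      proof -
        have "finite V'" using fV unfolding V'_def by simp
        then have "0 < card V'" using zV' card_gt_0_iff by blast
        then show ?thesis using cV' by simp
      qed
      moreover have "N - 1 \<le> card X" using deg pz unfolding X_def by blast
      ultimately show ?thesis using nN by linarith
    qed
    moreover have "finite (\<phi> ` V' - {\<phi> z})" using fimg by simp
    ultimately obtain y where y: "y \<in> X" "y \<notin> \<phi> ` V' - {\<phi> z}" using pick_outside by blast
    have "y \<noteq> \<phi> z" using y(1) nlD unfolding X_def by auto
    then have y2: "y \<in> W" "y \<notin> \<phi> ` V'" using y unfolding X_def by auto
    have sub: "A - A' \<subseteq> {(z,w)}" using AA unfolding A'_def V'_def by blast
    have m1: "(\<phi>(w := y)) z \<in> (\<phi>(w := y)) ` V" using zV' VV by blast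
    have m2: "((\<phi>(w := y)) z, (\<phi>(w := y)) w) \<in> AD" using y(1) zV' wV' unfolding X_def by (auto split: if_splits)
    have "\<forall>e\<in>A - A'. (\<phi>(w := y)) (fst e) \<in> (\<phi>(w := y)) ` V \<and> ((\<phi>(w := y)) (fst e), (\<phi>(w := y)) (snd e)) \<in> AD"
    proof
      fix e assume "e \<in> A - A'"
      then have "e = (z,w)" using sub by blast
      then show "(\<phi>(w := y)) (fst e) \<in> (\<phi>(w := y)) ` V \<and> ((\<phi>(w := y)) (fst e), (\<phi>(w := y)) (snd e)) \<in> AD"
        using m1 m2 by simp
    qed
    then show ?thesis by (rule ok[OF y2])
  qed
qed

lemma base_case:
  fixes VD :: "nat set"
  assumes dg: "is_digraph V A" and e0: "card A + num_cc V A \<le> card V" and n1: "card V \<ge> 1"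
    and dgD: "is_digraph VD AD" and nc: "\<not> colourable VD AD (card V - 1)"
  shows "contains_subdivision VD AD V A"
proof -
  obtain W where W: "W \<subseteq> VD" "W \<noteq> {}"
    "\<forall>x\<in>W. card V - 1 \<le> card {y\<in>W. (x,y) \<in> AD} \<and> card V - 1 \<le> card {y\<in>W. (y,x) \<in> AD}"
    using min_degree_sub[OF dgD nc] by blast
  obtain \<phi> where \<phi>: "inj_on \<phi> V" "\<phi> ` V \<subseteq> W" "\<forall>e\<in>A. (\<phi> (fst e), \<phi> (snd e)) \<in> AD"
    using greedy[OF dgD W, of V A] dg e0 by blast
  have AV: "A \<subseteq> V \<times> V" and nl: "\<forall>x. (x,x) \<notin> A" using dg unfolding is_digraph_def by auto
  define P where "P e = [\<phi> (fst e), \<phi> (snd e)]" for e :: "'a \<times> 'a"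
  have int: "internal_vertices (P e) = {}" for e unfolding P_def internal_vertices_def by simp
  have path: "is_dipath AD (P e) (\<phi> (fst e)) (\<phi> (snd e))" if "e \<in> A" for e
  proof -
    have "fst e \<noteq> snd e" "fst e \<in> V" "snd e \<in> V" using that nl AV by (cases e; auto)+
    then have "\<phi> (fst e) \<noteq> \<phi> (snd e)" using \<phi>(1) by (meson inj_on_contraD)
    moreover have "(\<phi> (fst e), \<phi> (snd e)) \<in> AD" using \<phi>(3) that by blast
    ultimately show ?thesis unfolding is_dipath_def P_def
      by (auto simp: less_Suc_eq nth_Cons')
  qed
  show ?thesis unfolding contains_subdivision_def
    using \<phi>(1) \<phi>(2) W(1) path int by blast
qed

lemma cycle_restrict:
  assumes "(x,x) \<in> B\<^sup>+"
  shows "(x,x) \<in> (B \<inter> {z. (x,z) \<in> B\<^sup>* \<and> (z,x) \<in> B\<^sup>*} \<times> {z. (x,z) \<in> B\<^sup>* \<and> (z,x) \<in> B\<^sup>*})\<^sup>+"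
proof -
  define Z where "Z = {z. (x,z) \<in> B\<^sup>* \<and> (z,x) \<in> B\<^sup>*}"
  have "(x,y) \<in> B\<^sup>+ \<Longrightarrow> (y,x) \<in> B\<^sup>* \<Longrightarrow> (x,y) \<in> (B \<inter> Z \<times> Z)\<^sup>+" for y
  proof (induction rule: trancl_induct)
    case (base y)
    then have "x \<in> Z" "y \<in> Z" unfolding Z_def by auto
    then show ?case using base by auto
  next
    case (step y z)
    have "(y,x) \<in> B\<^sup>*" using step(2,4) by (meson converse_rtrancl_into_rtrancl)
    then have IH: "(x,y) \<in> (B \<inter> Z \<times> Z)\<^sup>+" using step(3) by blast
    have "y \<in> Z" using step(1) \<open>(y,x) \<in> B\<^sup>*\<close> unfolding Z_def by auto
    moreover have "z \<in> Z" using step(1,2,4) unfolding Z_def by auto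
    ultimately have yzB: "(y,z) \<in> B \<inter> Z \<times> Z" using step(2) by auto
    show ?case by (rule trancl_into_trancl[OF IH yzB])
  qed
  then show ?thesis using assms unfolding Z_def by blast
qed

lemma halving:
  fixes l :: "'v \<Rightarrow> int"
  assumes step: "\<forall>x\<in>X. \<forall>y\<in>X. (x,y) \<in> A \<longrightarrow> l y \<le> l x + 1"
    and lev: "\<forall>i. colourable {x\<in>X. l x = i} A c"
  shows "colourable X A (2*c)"
proof -
  define g where "g i = (SOME f. acyclic_colouring {x\<in>X. l x = i} A c f)" for i
  have g: "acyclic_colouring {x\<in>X. l x = i} A c (g i)" for i
  proof -
    from lev have "\<exists>f. acyclic_colouring {x\<in>X. l x = i} A c f" unfolding colourable_def by blast
    then show ?thesis unfolding g_def by (rule someI_ex)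
  qed
  define bit where "bit x = (if even (l x) then 0 else 1::nat)" for x
  define f where "f x = 2 * g (l x) x + bit x" for x
  have gl: "x \<in> X \<Longrightarrow> g (l x) x < c" for x using g[of "l x"] unfolding acyclic_colouring_def by auto
  have "acyclic_colouring X A (2*c) f"
    unfolding acyclic_colouring_def
  proof (intro conjI allI impI ballI)
    show "f v < 2 * c" if "v \<in> X" for v using gl[OF that] unfolding f_def bit_def by auto
    fix t assume t: "t < 2 * c"
    define K where "K = {v \<in> X. f v = t}"
    define B where "B = A \<inter> K \<times> K"
    have Kg: "v \<in> K \<Longrightarrow> g (l v) v = t div 2" for v unfolding K_def f_def bit_def by auto
    have Kb: "v \<in> K \<Longrightarrow> bit v = t mod 2" for v unfolding K_def f_def bit_def by auto
    have mono1: "(y,z) \<in> B \<Longrightarrow> l z \<le> l y" for y z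
    proof -
      assume yz: "(y,z) \<in> B"
      then have yzK: "y \<in> K" "z \<in> K" "(y,z) \<in> A" unfolding B_def by auto
      then have "l z \<le> l y + 1" using step unfolding K_def by blast
      moreover have "bit y = bit z" using Kb yzK by simp
      then have "l z \<noteq> l y + 1" unfolding bit_def by (auto split: if_splits)
      ultimately show ?thesis by linarith
    qed
    have mono2: "(y,z) \<in> B\<^sup>* \<Longrightarrow> l z \<le> l y" for y z
      by (induction rule: rtrancl_induct) (use mono1 in force)+
    show "acyclic (A \<inter> {v \<in> X. f v = t} \<times> {v \<in> X. f v = t})"
      unfolding K_def[symmetric] B_def[symmetric] acyclic_def
    proof (intro allI notI)
      fix a assume a: "(a,a) \<in> B\<^sup>+"
      define Z where "Z = {z. (a,z) \<in> B\<^sup>* \<and> (z,a) \<in> B\<^sup>*}"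
      have cyc: "(a,a) \<in> (B \<inter> Z \<times> Z)\<^sup>+" using cycle_restrict[OF a] unfolding Z_def .
      define K' where "K' = {v \<in> {x\<in>X. l x = l a}. g (l a) v = t div 2}"
      have sub: "B \<inter> Z \<times> Z \<subseteq> A \<inter> K' \<times> K'"
      proof
        fix p assume p: "p \<in> B \<inter> Z \<times> Z"
        obtain y z where yz: "p = (y,z)" by (cases p)
        have "y \<in> K" "z \<in> K" "(y,z) \<in> A" using p yz unfolding B_def by auto
        moreover have "l y = l a" "l z = l a" using p yz mono2 unfolding Z_def by (auto intro: order.antisym)
        moreover have "g (l y) y = t div 2" "g (l z) z = t div 2" using Kg \<open>y \<in> K\<close> \<open>z \<in> K\<close> by auto
        ultimately show "p \<in> A \<inter> K' \<times> K'" using yz unfolding K'_def K_def by auto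
      qed
      have "acyclic (A \<inter> K' \<times> K')" using g[of "l a"] t unfolding acyclic_colouring_def K'_def by auto
      then show False using trancl_mono[OF cyc sub] unfolding acyclic_def by blast
    qed
  qed
  then show ?thesis unfolding colourable_def by blast
qed

definition scc :: "('b \<times> 'b) set \<Rightarrow> 'b set \<Rightarrow> 'b \<Rightarrow> 'b set" where
  "scc AD VD r = {w \<in> VD. (r,w) \<in> AD\<^sup>* \<and> (w,r) \<in> AD\<^sup>*}"

lemma scc_reduce:
  assumes all: "\<forall>r\<in>VD. colourable (scc AD VD r) AD k"
  shows "colourable VD AD k"
proof -
  define G where "G Z = (SOME f. acyclic_colouring Z AD k f)" for Z
  have G: "r \<in> VD \<Longrightarrow> acyclic_colouring (scc AD VD r) AD k (G (scc AD VD r))" for r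
  proof -
    assume "r \<in> VD"
    with all have "\<exists>f. acyclic_colouring (scc AD VD r) AD k f" unfolding colourable_def by blast
    then show ?thesis unfolding G_def by (rule someI_ex)
  qed
  have self: "r \<in> VD \<Longrightarrow> r \<in> scc AD VD r" for r unfolding scc_def by simp
  have sccEq: "scc AD VD y = scc AD VD a" if ay: "(a,y) \<in> AD\<^sup>*" and ya: "(y,a) \<in> AD\<^sup>*" for y a
  proof -
    have "(y,w) \<in> AD\<^sup>* \<longleftrightarrow> (a,w) \<in> AD\<^sup>*" for w
      using rtrancl_trans[OF ay, of w] rtrancl_trans[OF ya, of w] by blast
    moreover have "(w,y) \<in> AD\<^sup>* \<longleftrightarrow> (w,a) \<in> AD\<^sup>*" for w
      using rtrancl_trans[of w y AD a] rtrancl_trans[of w a AD y] ay ya by blast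
    ultimately show ?thesis unfolding scc_def by auto
  qed
  define f where "f v = G (scc AD VD v) v" for v
  have "acyclic_colouring VD AD k f"
    unfolding acyclic_colouring_def
  proof (intro conjI allI impI ballI)
    show "f v < k" if "v \<in> VD" for v using G[OF that] self[OF that] unfolding f_def acyclic_colouring_def by blast
    fix t assume t: "t < k"
    define K where "K = {v \<in> VD. f v = t}"
    define B where "B = AD \<inter> K \<times> K"
    show "acyclic (AD \<inter> {v \<in> VD. f v = t} \<times> {v \<in> VD. f v = t})"
      unfolding K_def[symmetric] B_def[symmetric] acyclic_def
    proof (intro allI notI)
      fix a assume a: "(a,a) \<in> B\<^sup>+"
      define Z where "Z = {z. (a,z) \<in> B\<^sup>* \<and> (z,a) \<in> B\<^sup>*}"
      have cyc: "(a,a) \<in> (B \<inter> Z \<times> Z)\<^sup>+" using cycle_restrict[OF a] unfolding Z_def .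
      have aK: "a \<in> K" using a unfolding B_def by (auto elim: tranclE)
      then have aV: "a \<in> VD" unfolding K_def by simp
      have BA: "B\<^sup>* \<subseteq> AD\<^sup>*" unfolding B_def by (rule rtrancl_mono) auto
      define K' where "K' = {v \<in> scc AD VD a. G (scc AD VD a) v = t}"
      have sub: "B \<inter> Z \<times> Z \<subseteq> AD \<inter> K' \<times> K'"
      proof
        fix p assume p: "p \<in> B \<inter> Z \<times> Z"
        obtain y z where yz: "p = (y,z)" by (cases p)
        have yK: "y \<in> K" and zK: "z \<in> K" and yzA: "(y,z) \<in> AD" using p yz unfolding B_def by auto
        have "(a,y) \<in> AD\<^sup>*" "(y,a) \<in> AD\<^sup>*" "(a,z) \<in> AD\<^sup>*" "(z,a) \<in> AD\<^sup>*"
          using p yz BA unfolding Z_def by auto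
        moreover have "y \<in> VD" "z \<in> VD" using yK zK unfolding K_def by auto
        ultimately have "scc AD VD y = scc AD VD a" "scc AD VD z = scc AD VD a" "y \<in> scc AD VD a" "z \<in> scc AD VD a"
          using sccEq[of a y] sccEq[of a z] unfolding scc_def[of AD VD a] by auto
        then show "p \<in> AD \<inter> K' \<times> K'" using yK zK yzA yz unfolding K'_def K_def f_def by auto
      qed
      have "acyclic (AD \<inter> K' \<times> K')" using G[OF aV] t unfolding acyclic_colouring_def K'_def by auto
      then show False using trancl_mono[OF cyc sub] unfolding acyclic_def by blast
    qed
  qed
  then show ?thesis unfolding colourable_def by blast
qed

definition dout :: "('b \<times> 'b) set \<Rightarrow> 'b \<Rightarrow> 'b \<Rightarrow> nat" where
  "dout AD r w = (LEAST j. (r,w) \<in> AD ^^ j)"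
definition din :: "('b \<times> 'b) set \<Rightarrow> 'b \<Rightarrow> 'b \<Rightarrow> nat" where
  "din AD r w = (LEAST j. (w,r) \<in> AD ^^ j)"

lemma dout_pow: "(r,w) \<in> AD\<^sup>* \<Longrightarrow> (r,w) \<in> AD ^^ dout AD r w"
  unfolding dout_def using rtrancl_imp_relpow by (metis LeastI_ex)
lemma din_pow: "(w,r) \<in> AD\<^sup>* \<Longrightarrow> (w,r) \<in> AD ^^ din AD r w"
  unfolding din_def using rtrancl_imp_relpow by (metis LeastI_ex)

lemma dout_step: "(r,x) \<in> AD\<^sup>* \<Longrightarrow> (x,y) \<in> AD \<Longrightarrow> dout AD r y \<le> dout AD r x + 1"
proof -
  assume a: "(r,x) \<in> AD\<^sup>*" "(x,y) \<in> AD"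
  have "(r,y) \<in> AD ^^ Suc (dout AD r x)" using relpow_Suc_I[OF dout_pow[OF a(1)] a(2)] .
  then show ?thesis unfolding dout_def[of AD r y] by (metis Least_le Suc_eq_plus1)
qed

lemma din_step: "(y,r) \<in> AD\<^sup>* \<Longrightarrow> (x,y) \<in> AD \<Longrightarrow> din AD r x \<le> din AD r y + 1"
proof -
  assume a: "(y,r) \<in> AD\<^sup>*" "(x,y) \<in> AD"
  have "(x,r) \<in> AD ^^ Suc (din AD r y)" using relpow_Suc_I2[OF a(2) din_pow[OF a(1)]] .
  then show ?thesis unfolding din_def[of AD r x] by (metis Least_le Suc_eq_plus1)
qed

lemma walk_in:
  "(x,r) \<in> AD\<^sup>* \<Longrightarrow> (x,r) \<in> (AD \<inter> {z. z = x \<or> din AD r z < din AD r x} \<times> {z. z = x \<or> din AD r z < din AD r x})\<^sup>*"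
proof (induction "din AD r x" arbitrary: x rule: less_induct)
  case less
  show ?case
  proof (cases "din AD r x")
    case 0
    then have "x = r" using din_pow[OF less.prems] by simp
    then show ?thesis by simp
  next
    case (Suc n)
    then have "(x,r) \<in> AD ^^ Suc n" using din_pow[OF less.prems] by simp
    then obtain z where xz: "(x,z) \<in> AD" and zr: "(z,r) \<in> AD ^^ n" by (rule relpow_Suc_E2)
    have zr': "(z,r) \<in> AD\<^sup>*" using zr by (meson relpow_imp_rtrancl)
    have "din AD r z \<le> n" unfolding din_def using zr by (rule Least_le)
    then have lt: "din AD r z < din AD r x" using Suc by simp
    have IH: "(z,r) \<in> (AD \<inter> {w. w = z \<or> din AD r w < din AD r z} \<times> {w. w = z \<or> din AD r w < din AD r z})\<^sup>*"
      using less.hyps[OF lt zr'] .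
    have sub: "AD \<inter> {w. w = z \<or> din AD r w < din AD r z} \<times> {w. w = z \<or> din AD r w < din AD r z}
        \<subseteq> AD \<inter> {w. w = x \<or> din AD r w < din AD r x} \<times> {w. w = x \<or> din AD r w < din AD r x}"
      using lt by auto
    have "(x,z) \<in> AD \<inter> {w. w = x \<or> din AD r w < din AD r x} \<times> {w. w = x \<or> din AD r w < din AD r x}"
      using xz lt by auto
    moreover have "(z,r) \<in> (AD \<inter> {w. w = x \<or> din AD r w < din AD r x} \<times> {w. w = x \<or> din AD r w < din AD r x})\<^sup>*"
      using rtrancl_mono[OF sub] IH by blast
    ultimately show ?thesis by (rule converse_rtrancl_into_rtrancl)
  qed
qed

lemma walk_out:
  "(r,y) \<in> AD\<^sup>* \<Longrightarrow> (r,y) \<in> (AD \<inter> {z. z = y \<or> dout AD r z < dout AD r y} \<times> {z. z = y \<or> dout AD r z < dout AD r y})\<^sup>*"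
proof (induction "dout AD r y" arbitrary: y rule: less_induct)
  case less
  show ?case
  proof (cases "dout AD r y")
    case 0
    then have "y = r" using dout_pow[OF less.prems] by simp
    then show ?thesis by simp
  next
    case (Suc n)
    then have "(r,y) \<in> AD ^^ Suc n" using dout_pow[OF less.prems] by simp
    then obtain z where rz: "(r,z) \<in> AD ^^ n" and zy: "(z,y) \<in> AD" by (rule relpow_Suc_E)
    have rz': "(r,z) \<in> AD\<^sup>*" using rz by (meson relpow_imp_rtrancl)
    have "dout AD r z \<le> n" unfolding dout_def using rz by (rule Least_le)
    then have lt: "dout AD r z < dout AD r y" using Suc by simp
    have IH: "(r,z) \<in> (AD \<inter> {w. w = z \<or> dout AD r w < dout AD r z} \<times> {w. w = z \<or> dout AD r w < dout AD r z})\<^sup>*"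
      using less.hyps[OF lt rz'] .
    have sub: "AD \<inter> {w. w = z \<or> dout AD r w < dout AD r z} \<times> {w. w = z \<or> dout AD r w < dout AD r z}
        \<subseteq> AD \<inter> {w. w = y \<or> dout AD r w < dout AD r y} \<times> {w. w = y \<or> dout AD r w < dout AD r y}"
      using lt by auto
    have "(z,y) \<in> AD \<inter> {w. w = y \<or> dout AD r w < dout AD r y} \<times> {w. w = y \<or> dout AD r w < dout AD r y}"
      using zy lt by auto
    moreover have "(r,z) \<in> (AD \<inter> {w. w = y \<or> dout AD r w < dout AD r y} \<times> {w. w = y \<or> dout AD r w < dout AD r y})\<^sup>*"
      using rtrancl_mono[OF sub] IH by blast
    ultimately show ?thesis by (meson rtrancl_into_rtrancl)
  qed
qed

definition chain :: "('b \<times> 'b) set \<Rightarrow> 'b list \<Rightarrow> bool" where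
  "chain B P \<longleftrightarrow> (\<forall>i. Suc i < length P \<longrightarrow> (P ! i, P ! Suc i) \<in> B)"

lemma trancl_path:
  assumes "(x,y) \<in> B\<^sup>+" "x \<noteq> y"
  shows "\<exists>P. distinct P \<and> 2 \<le> length P \<and> hd P = x \<and> last P = y \<and> chain B P"
  using assms
proof (induction rule: trancl_induct)
  case (base y)
  then show ?case by (intro exI[of _ "[x,y]"]) (auto simp: chain_def less_Suc_eq)
next
  case (step y z)
  show ?case
  proof (cases "y = x")
    case True
    then show ?thesis using step(2,4) by (intro exI[of _ "[x,z]"]) (auto simp: chain_def less_Suc_eq)
  next
    case False
    then obtain P where P: "distinct P" "2 \<le> length P" "hd P = x" "last P = y" "chain B P" using step.IH by blast
    have Pne: "P \<noteq> []" using P(2) by auto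
    show ?thesis
    proof (cases "z \<in> set P")
      case True
      then obtain k where k: "k < length P" "P ! k = z" by (meson in_set_conv_nth)
      have "P ! 0 = x" using P(3) Pne by (simp add: hd_conv_nth)
      then have k0: "k \<noteq> 0" using k step.prems by (metis)
      define P' where "P' = take (Suc k) P"
      have "distinct P'" unfolding P'_def using P(1) by simp
      moreover have "2 \<le> length P'" unfolding P'_def using k k0 by simp
      moreover have "hd P' = x" unfolding P'_def using P(3) Pne by simp
      moreover have "last P' = z"
      proof -
        have "P' \<noteq> []" "length P' = Suc k" unfolding P'_def using k by auto
        then have "last P' = P' ! k" by (simp add: last_conv_nth)
        then show ?thesis unfolding P'_def using k by simp
      qed
      moreover have "chain B P'" using P(5) k unfolding chain_def P'_def by simp
      ultimately show ?thesis by blast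
    next
      case False
      define P' where "P' = P @ [z]"
      have "distinct P'" unfolding P'_def using P(1) False by simp
      moreover have "2 \<le> length P'" unfolding P'_def using P(2) by simp
      moreover have "hd P' = x" unfolding P'_def using P(3) Pne by simp
      moreover have "last P' = z" unfolding P'_def by simp
      moreover have "chain B P'"
        unfolding chain_def
      proof (intro allI impI)
        fix i assume i: "Suc i < length P'"
        show "(P' ! i, P' ! Suc i) \<in> B"
        proof (cases "Suc i < length P")
          case True then show ?thesis using P(5) unfolding chain_def P'_def by (simp add: nth_append)
        next
          case False
          then have "Suc i = length P" using i unfolding P'_def by simp
          then have ii: "i = length P - 1" by simp
          have "P' ! i = y" unfolding P'_def ii using P(4) Pne by (simp add: nth_append last_conv_nth)
          moreover have "P' ! Suc i = z" unfolding P'_def using \<open>Suc i = length P\<close> by (simp add: nth_append)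
          ultimately show ?thesis using step(2) by simp
        qed
      qed
      ultimately show ?thesis by blast
    qed
  qed
qed

lemma chain_set:
  assumes "2 \<le> length P" "chain R P" "R \<subseteq> Y \<times> Y" shows "set P \<subseteq> Y"
proof
  fix v assume "v \<in> set P"
  then obtain k where k: "k < length P" "P ! k = v" by (meson in_set_conv_nth)
  show "v \<in> Y"
  proof (cases "Suc k < length P")
    case True
    then show ?thesis using assms(2,3) k unfolding chain_def by blast
  next
    case False
    then have "Suc (k - 1) < length P" "Suc (k - 1) = k" using k assms(1) by auto
    then show ?thesis using assms(2,3) k unfolding chain_def by (metis mem_Sigma_iff subsetD)
  qed
qed

lemma dipath_chain: "is_dipath R P x y \<longleftrightarrow> distinct P \<and> 2 \<le> length P \<and> hd P = x \<and> last P = y \<and> chain R P"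
  unfolding is_dipath_def chain_def by auto

lemma internal_props:
  assumes "distinct P" "2 \<le> length P"
  shows "internal_vertices P \<subseteq> set P" "hd P \<notin> internal_vertices P" "last P \<notin> internal_vertices P"
proof -
  obtain a P' where P: "P = a # P'" using assms(2) by (cases P) auto
  have P'ne: "P' \<noteq> []" using assms(2) P by auto
  have iv: "internal_vertices P = set (butlast P')" unfolding internal_vertices_def P by simp
  show "internal_vertices P \<subseteq> set P" unfolding iv unfolding P by (auto dest: in_set_butlastD)
  show "hd P \<notin> internal_vertices P" unfolding iv using assms(1) P by (auto dest: in_set_butlastD)
  have "distinct P'" using assms(1) P by simp
  moreover have "P' = butlast P' @ [last P']" using P'ne by simp
  ultimately have "last P' \<notin> set (butlast P')" by (metis distinct_append not_distinct_conv_prefix)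
  moreover have "last P = last P'" using P P'ne by simp
  ultimately show "last P \<notin> internal_vertices P" unfolding iv by simp
qed

lemma chain_mono: "chain R P \<Longrightarrow> R \<subseteq> R' \<Longrightarrow> chain R' P"
  unfolding chain_def by blast

lemma dipath_mono: "is_dipath R P x y \<Longrightarrow> R \<subseteq> R' \<Longrightarrow> is_dipath R' P x y"
  unfolding is_dipath_def by blast

lemma dipath_set: "is_dipath R P x y \<Longrightarrow> R \<subseteq> Y \<times> Y \<Longrightarrow> set P \<subseteq> Y"
  unfolding dipath_chain using chain_set by blast

lemma level_set:
  fixes VD :: "'b set"
  assumes dg: "is_digraph VD AD" and nc: "\<not> colourable VD AD (4*K)"
  shows "\<exists>S\<subseteq>VD. \<not> colourable S AD K \<and>
    (\<forall>x\<in>S. \<forall>y\<in>S. x \<noteq> y \<longrightarrow> (\<exists>Q. is_dipath AD Q x y \<and> internal_vertices Q \<inter> S = {}))"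
proof -
  have "\<not> (\<forall>r\<in>VD. colourable (scc AD VD r) AD (4*K))" using scc_reduce[of VD AD "4*K"] nc by blast
  then obtain r where r: "r \<in> VD" "\<not> colourable (scc AD VD r) AD (4*K)" by blast
  define C where "C = scc AD VD r"
  have Cr: "x \<in> C \<Longrightarrow> (r,x) \<in> AD\<^sup>* \<and> (x,r) \<in> AD\<^sup>*" for x unfolding C_def scc_def by auto
  have CV: "C \<subseteq> VD" unfolding C_def scc_def by auto
  define l1 where "l1 w = int (dout AD r w)" for w
  have st1: "\<forall>x\<in>C. \<forall>y\<in>C. (x,y) \<in> AD \<longrightarrow> l1 y \<le> l1 x + 1"
  proof (intro ballI impI)
    fix x y assume "x \<in> C" "y \<in> C" "(x,y) \<in> AD"
    then show "l1 y \<le> l1 x + 1" using dout_step[of r x AD y] Cr[of x] unfolding l1_def by simp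
  qed
  have "\<not> (\<forall>i. colourable {x\<in>C. l1 x = i} AD (2*K))"
  proof
    assume "\<forall>i. colourable {x\<in>C. l1 x = i} AD (2*K)"
    then have "colourable C AD (2*(2*K))" by (rule halving[OF st1])
    then show False using r(2) unfolding C_def by simp
  qed
  then obtain i where Li: "\<not> colourable {x\<in>C. l1 x = i} AD (2*K)" by blast
  define L where "L = {x\<in>C. l1 x = i}"
  define l2 where "l2 w = - int (din AD r w)" for w
  have st2: "\<forall>x\<in>L. \<forall>y\<in>L. (x,y) \<in> AD \<longrightarrow> l2 y \<le> l2 x + 1"
  proof (intro ballI impI)
    fix x y assume "x \<in> L" "y \<in> L" "(x,y) \<in> AD"
    then show "l2 y \<le> l2 x + 1" using din_step[of y r AD x] Cr[of y] unfolding l2_def L_def by simp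
  qed
  have "\<not> (\<forall>j. colourable {x\<in>L. l2 x = j} AD K)"
  proof
    assume "\<forall>j. colourable {x\<in>L. l2 x = j} AD K"
    then have "colourable L AD (2*K)" by (rule halving[OF st2])
    then show False using Li unfolding L_def by simp
  qed
  then obtain j where Sj: "\<not> colourable {x\<in>L. l2 x = j} AD K" by blast
  define S where "S = {x\<in>L. l2 x = j}"
  have SC: "S \<subseteq> C" unfolding S_def L_def by auto
  have SV: "S \<subseteq> VD" using SC CV by auto
  have same: "x \<in> S \<Longrightarrow> y \<in> S \<Longrightarrow> dout AD r x = dout AD r y \<and> din AD r x = din AD r y" for x y
    unfolding S_def L_def l1_def l2_def by auto
  have paths: "\<exists>Q. is_dipath AD Q x y \<and> internal_vertices Q \<inter> S = {}"
    if xS: "x \<in> S" and yS: "y \<in> S" and xy: "x \<noteq> y" for x y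
  proof -
    define Y where "Y = - S \<union> {x,y}"
    have xr: "(x,r) \<in> AD\<^sup>*" and ry: "(r,y) \<in> AD\<^sup>*" using Cr xS yS SC by auto
    have Yin: "{z. z = x \<or> din AD r z < din AD r x} \<subseteq> Y"
    proof
      fix z assume "z \<in> {z. z = x \<or> din AD r z < din AD r x}"
      then have "z = x \<or> din AD r z < din AD r x" by simp
      moreover have "z \<in> S \<Longrightarrow> din AD r z = din AD r x" using same[OF xS, of z] by simp
      ultimately show "z \<in> Y" unfolding Y_def by auto
    qed
    have Yout: "{z. z = y \<or> dout AD r z < dout AD r y} \<subseteq> Y"
    proof
      fix z assume "z \<in> {z. z = y \<or> dout AD r z < dout AD r y}"
      then have "z = y \<or> dout AD r z < dout AD r y" by simp
      moreover have "z \<in> S \<Longrightarrow> dout AD r z = dout AD r y" using same[OF _ yS, of z] by simp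
      ultimately show "z \<in> Y" unfolding Y_def by auto
    qed
    have "(x,r) \<in> (AD \<inter> Y \<times> Y)\<^sup>*"
    proof -
      have "AD \<inter> {z. z = x \<or> din AD r z < din AD r x} \<times> {z. z = x \<or> din AD r z < din AD r x} \<subseteq> AD \<inter> Y \<times> Y"
        using Yin by auto
      from rtrancl_mono[OF this] walk_in[OF xr] show ?thesis by blast
    qed
    moreover have "(r,y) \<in> (AD \<inter> Y \<times> Y)\<^sup>*"
    proof -
      have "AD \<inter> {z. z = y \<or> dout AD r z < dout AD r y} \<times> {z. z = y \<or> dout AD r z < dout AD r y} \<subseteq> AD \<inter> Y \<times> Y"
        using Yout by auto
      from rtrancl_mono[OF this] walk_out[OF ry] show ?thesis by blast
    qed
    ultimately have "(x,y) \<in> (AD \<inter> Y \<times> Y)\<^sup>*" by (rule rtrancl_trans)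
    then have "(x,y) \<in> (AD \<inter> Y \<times> Y)\<^sup>+" using xy by (meson rtranclD)
    then obtain Q where Q: "distinct Q" "2 \<le> length Q" "hd Q = x" "last Q = y" "chain (AD \<inter> Y \<times> Y) Q"
      using trancl_path[OF _ xy] by blast
    have dp: "is_dipath AD Q x y" unfolding dipath_chain using Q chain_mono[OF Q(5) Int_lower1] by blast
    have "set Q \<subseteq> Y" using chain_set[OF Q(2,5)] by blast
    moreover have "internal_vertices Q \<subseteq> set Q - {x,y}" using internal_props[OF Q(1,2)] Q(3,4) by blast
    ultimately have "internal_vertices Q \<subseteq> - S" unfolding Y_def by blast
    then have "internal_vertices Q \<inter> S = {}" by blast
    then show ?thesis using dp by blast
  qed
  show ?thesis using SV Sj[folded S_def] paths by blast
qed


lemma main_ind: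
  fixes V :: "'a set" and A and VD :: "nat set"
  assumes "is_digraph V A" "1 \<le> card V" "is_digraph VD AD"
    "\<not> colourable VD AD (4 ^ (card A + num_cc V A - card V) * (card V - 1))"
  shows "contains_subdivision VD AD V A"
  using assms
proof (induction "card A" arbitrary: A VD AD rule: less_induct)
  case less
  have fV: "finite V" and AV: "A \<subseteq> V \<times> V" and nl: "\<forall>x. (x,x) \<notin> A"
    using less.prems(1) unfolding is_digraph_def by auto
  have fA: "finite A" using AV fV finite_subset by blast
  show ?case
  proof (cases "\<exists>a\<in>A. (fst a, snd a) \<in> eqv (A - {a})")
    case False
    then have e0: "card A + num_cc V A \<le> card V" using cc_bridges[OF fA AV fV] by blast
    then have "card A + num_cc V A - card V = 0" by simp
    then have "\<not> colourable VD AD (card V - 1)" using less.prems(4) by simp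
    then show ?thesis using base_case[OF less.prems(1) e0 less.prems(2,3)] by blast
  next
    case True
    then obtain a where aA: "a \<in> A" and conn: "(fst a, snd a) \<in> eqv (A - {a})" by blast
    obtain u v where a: "a = (u,v)" by (cases a)
    define A0 where "A0 = A - {a}"
    have AA: "A = insert (u,v) A0" using aA a unfolding A0_def by auto
    have conn': "(u,v) \<in> eqv A0" using conn a unfolding A0_def by simp
    have cc: "num_cc V A = num_cc V A0" using num_cc_connected[OF conn', of V] AA by simp
    have cA: "card A = card A0 + 1"
    proof -
      have "card A0 = card A - 1" unfolding A0_def using aA fA by simp
      moreover have "card A \<ge> 1" using aA fA by (metis One_nat_def Suc_leI card_gt_0_iff empty_iff)
      ultimately show ?thesis by simp
    qed
    have A0V: "A0 \<subseteq> V \<times> V" using AV unfolding A0_def by auto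
    have fA0: "finite A0" using fA unfolding A0_def by simp
    have low: "card V \<le> card A0 + num_cc V A0" by (rule cc_lower[OF fA0 A0V fV])
    define e0 where "e0 = card A0 + num_cc V A0 - card V"
    have e: "card A + num_cc V A - card V = Suc e0" using cA cc low unfolding e0_def by simp
    define K where "K = 4 ^ e0 * (card V - 1)"
    have K4: "4 ^ (card A + num_cc V A - card V) * (card V - 1) = 4 * K" unfolding e K_def by simp
    have uvV: "u \<in> V" "v \<in> V" "u \<noteq> v" using aA a AV nl by auto
    have "card {u,v} \<le> card V" using uvV fV by (intro card_mono) auto
    then have n2: "card V \<ge> 2" using uvV by simp
    obtain S where S: "S \<subseteq> VD" "\<not> colourable S AD K"
      "\<forall>x\<in>S. \<forall>y\<in>S. x \<noteq> y \<longrightarrow> (\<exists>Q. is_dipath AD Q x y \<and> internal_vertices Q \<inter> S = {})"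
      using level_set[OF less.prems(3), of K] less.prems(4) K4 by auto
    have fS: "finite S" using S(1) less.prems(3) finite_subset unfolding is_digraph_def by blast
    have dgS: "is_digraph S (AD \<inter> S \<times> S)" using fS less.prems(3) unfolding is_digraph_def by auto
    have ncS: "\<not> colourable S (AD \<inter> S \<times> S) (4 ^ (card A0 + num_cc V A0 - card V) * (card V - 1))"
      using S(2) colourable_restrict[of S AD K] unfolding K_def e0_def by simp
    have dg0: "is_digraph V A0" using less.prems(1) unfolding is_digraph_def A0_def by auto
    have lt: "card A0 < card A" using cA by simp
    have csub: "contains_subdivision S (AD \<inter> S \<times> S) V A0"
      by (rule less.hyps[OF lt dg0 less.prems(2) dgS ncS])
    obtain \<phi> P where all: "inj_on \<phi> V \<and> \<phi> ` V \<subseteq> S \<and>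
        (\<forall>e\<in>A0. is_dipath (AD \<inter> S \<times> S) (P e) (\<phi> (fst e)) (\<phi> (snd e)) \<and> internal_vertices (P e) \<inter> \<phi> ` V = {}) \<and>
        (\<forall>e\<in>A0. \<forall>e'\<in>A0. e \<noteq> e' \<longrightarrow> internal_vertices (P e) \<inter> internal_vertices (P e') = {})"
      using csub unfolding contains_subdivision_def by (elim exE) fast
    have \<phi>: "inj_on \<phi> V" "\<phi> ` V \<subseteq> S" using all by (rule conjunct1, blast)
    have Pp: "\<forall>e\<in>A0. is_dipath (AD \<inter> S \<times> S) (P e) (\<phi> (fst e)) (\<phi> (snd e)) \<and> internal_vertices (P e) \<inter> \<phi> ` V = {}"
      using all by (elim conjE)
    have Pd: "\<forall>e\<in>A0. \<forall>e'\<in>A0. e \<noteq> e' \<longrightarrow> internal_vertices (P e) \<inter> internal_vertices (P e') = {}"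
      using all by (elim conjE)
    have puv: "\<phi> u \<in> S" "\<phi> v \<in> S" "\<phi> u \<noteq> \<phi> v" using \<phi> uvV by (auto dest: inj_onD)
    obtain Q where Q: "is_dipath AD Q (\<phi> u) (\<phi> v)" "internal_vertices Q \<inter> S = {}" using S(3) puv by blast
    define P' where "P' = P(a := Q)"
    have inS: "e \<in> A0 \<Longrightarrow> internal_vertices (P e) \<subseteq> S" for e
    proof -
      assume "e \<in> A0"
      then have dp: "is_dipath (AD \<inter> S \<times> S) (P e) (\<phi> (fst e)) (\<phi> (snd e))" using Pp by blast
      then have "set (P e) \<subseteq> S" by (rule dipath_set) auto
      moreover have "internal_vertices (P e) \<subseteq> set (P e)"
        using internal_props(1) dp unfolding is_dipath_def by blast
      ultimately show ?thesis by blast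
    qed
    have A0a: "e \<in> A \<Longrightarrow> e \<noteq> a \<Longrightarrow> e \<in> A0" for e unfolding A0_def by simp
    show ?thesis
      unfolding contains_subdivision_def
    proof (intro exI conjI ballI impI)
      show "inj_on \<phi> V" by (rule \<phi>(1))
      show "\<phi> ` V \<subseteq> VD" using \<phi>(2) S(1) by blast
      fix e assume eA: "e \<in> A"
      show "is_dipath AD (P' e) (\<phi> (fst e)) (\<phi> (snd e))"
      proof (cases "e = a")
        case True then show ?thesis using Q(1) a unfolding P'_def by simp
      next
        case False
        then show ?thesis using Pp A0a[OF eA False] dipath_mono[of "AD \<inter> S \<times> S" _ _ _ AD] unfolding P'_def by auto
      qed
      show "internal_vertices (P' e) \<inter> \<phi> ` V = {}"
      proof (cases "e = a")
        case True then show ?thesis using Q(2) \<phi>(2) unfolding P'_def by auto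
      next
        case False
        then show ?thesis using Pp A0a[OF eA False] unfolding P'_def by auto
      qed
    next
      fix e e' assume eA: "e \<in> A" and eA': "e' \<in> A" and ne: "e \<noteq> e'"
      show "internal_vertices (P' e) \<inter> internal_vertices (P' e') = {}"
      proof (cases "e = a")
        case True
        then have "e' \<in> A0" using A0a[OF eA'] ne by simp
        then show ?thesis using True inS[of e'] Q(2) ne unfolding P'_def by auto
      next
        case False
        note e0 = A0a[OF eA False]
        show ?thesis
        proof (cases "e' = a")
          case True
          then show ?thesis using e0 inS[of e] Q(2) ne unfolding P'_def by auto
        next
          case False
          then show ?thesis using Pd e0 A0a[OF eA' False] ne \<open>e \<noteq> a\<close> unfolding P'_def by auto
        qed
      qed
    qed
  qed
qed

theorem corollary36:
  fixes V :: "'a set" and A :: "('a \<times> 'a) set"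
  assumes "is_digraph V A"
  shows "int (mad_chi V A) \<le> 4 ^ (card A + num_cc V A - card V) * (int (card V) - 1) + 1"
proof (cases "card V = 0")
  case True
  have fV: "finite V" and AV: "A \<subseteq> V \<times> V" using assms unfolding is_digraph_def by auto
  then have V0: "V = {}" using True by simp
  then have A0: "A = {}" using AV by auto
  have cc0: "num_cc V A = 0" unfolding num_cc_def V0 by (simp add: quotient_def)
  have "contains_subdivision VD AD V A" for VD :: "nat set" and AD
    unfolding contains_subdivision_def V0 A0 by simp
  then have "mad_chi V A = 0" unfolding mad_chi_def by (intro Least_eq_0) blast
  then show ?thesis using True A0 cc0 by simp
next
  case False
  define e where "e = card A + num_cc V A - card V"
  define c where "c = 4 ^ e * (card V - 1) + 1"
  have "mad_chi V A \<le> c"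
    unfolding mad_chi_def
  proof (rule Least_le, intro allI impI, elim conjE)
    fix VD :: "nat set" and AD
    assume dgD: "is_digraph VD AD" and dc: "c \<le> dichromatic VD AD"
    have "\<not> colourable VD AD (c - 1)" by (rule dichromatic_ge_not_col[OF dc]) (simp add: c_def)
    then have "\<not> colourable VD AD (4 ^ e * (card V - 1))" unfolding c_def by simp
    then show "contains_subdivision VD AD V A"
      using main_ind[OF assms _ dgD] False unfolding e_def by simp
  qed
  then have "int (mad_chi V A) \<le> int c" by simp
  also have "\<dots> = 4 ^ e * (int (card V) - 1) + 1" unfolding c_def using False by (simp add: of_nat_diff)
  finally show ?thesis unfolding e_def .
qed

end
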